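(* Let $\mathbf{X}=(X_1,\ldots,X_d)$ have mutually independent components and let $\mathbf{X}'$ be an independent copy of $\mathbf{X}$. For $A\subseteq\{1,\ldots,d\}$ define $\mathbf{X}^{\sim A}$ by $\mathbf{X}^{\sim A}_A=\mathbf{X}_A$ and $\mathbf{X}^{\sim A}_{-A}=\mathbf{X}'_{-A}$. Let $Y=\eta(\mathbf{X})$, $Y'=\eta(\mathbf{X}')$, $Y^{\sim A}=\eta(\mathbf{X}^{\sim A})$, and let $k_{\mathcal{Y}}$ be a positive definite kernel on the output space with $\mathbb{E}_{\xi\sim\mathrm{P}_{Y\mid\mathbf{X}_B=\mathbf{x}_B}}k_{\mathcal{Y}}(\xi,\xi)<\infty$ for all $B$ and $\mathbf{x}_B$. Then $$\mathbb{E}_{\mathbf{X}_A}\Big(\mathrm{MMD}^2\big(\mathrm{P}_Y,\mathrm{P}_{Y\mid\mathbf{X}_A}\big)\Big)=\mathbb{E}\,k_{\mathcal{Y}}(Y,Y^{\sim A})-\mathbb{E}\,k_{\mathcal{Y}}(Y,Y').$$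
   Context: $\mathbf{X}_A$ is the subvector with indices in $A$, $\mathbf{X}_{-A}$ the subvector with indices in $\{1,\ldots,d\}\setminus A$; $\mathrm{P}_{Y\mid\mathbf{X}_A}$ is the conditional law of $Y$ given $\mathbf{X}_A$. $\mathrm{MMD}^2(\mathrm{P},\mathrm{Q})=\mathbb{E}k_{\mathcal{Y}}(\xi,\xi')-2\mathbb{E}k_{\mathcal{Y}}(\xi,\zeta)+\mathbb{E}k_{\mathcal{Y}}(\zeta,\zeta')$ with $\xi,\xi'\sim\mathrm{P}$, $\zeta,\zeta'\sim\mathrm{Q}$ independent. *)

theory Defs
  imports "HOL-Probability.Probability"
begin

definition pd_kernel :: "'y measure \<Rightarrow> ('y \<Rightarrow> 'y \<Rightarrow> real) \<Rightarrow> bool" where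
  "pd_kernel N k \<longleftrightarrow>
     (\<forall>x\<in>space N. \<forall>y\<in>space N. k x y = k y x) \<and>
     (\<forall>(n::nat) (c::nat \<Rightarrow> real) (y::nat \<Rightarrow> 'y). (\<forall>i<n. y i \<in> space N) \<longrightarrow>
        0 \<le> (\<Sum>i<n. \<Sum>j<n. c i * c j * k (y i) (y j)))"

definition MMD2 :: "('y \<Rightarrow> 'y \<Rightarrow> real) \<Rightarrow> 'y measure \<Rightarrow> 'y measure \<Rightarrow> real" where
  "MMD2 k P Q =
     (\<integral>z. case_prod k z \<partial>(P \<Otimes>\<^sub>M P))
     - 2 * (\<integral>z. case_prod k z \<partial>(P \<Otimes>\<^sub>M Q))
     + (\<integral>z. case_prod k z \<partial>(Q \<Otimes>\<^sub>M Q))"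

definition is_cond_law ::
  "'w measure \<Rightarrow> 'b measure \<Rightarrow> ('w \<Rightarrow> 'b) \<Rightarrow> 'y measure \<Rightarrow> ('w \<Rightarrow> 'y) \<Rightarrow> ('b \<Rightarrow> 'y measure) \<Rightarrow> bool"
where
  "is_cond_law P MW W N Z K \<longleftrightarrow>
     K \<in> measurable MW (prob_algebra N) \<and>
     (\<forall>S\<in>sets MW. \<forall>T\<in>sets N.
        measure P {\<omega>\<in>space P. W \<omega> \<in> S \<and> Z \<omega> \<in> T}
        = (\<integral>x. indicator S x * measure (K x) T \<partial>(distr P MW W)))"

end

theory Submission
  imports Defs
begin



lemma pd_sum:
  fixes n :: nat and c :: "nat \<Rightarrow> real" and y :: "nat \<Rightarrow> 'y"
  assumes "pd_kernel N k" "\<forall>i<n. y i \<in> space N"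
  shows "0 \<le> (\<Sum>i<n. \<Sum>j<n. c i * c j * k (y i) (y j))"
  using assms unfolding pd_kernel_def by auto

lemma pd_diag_nonneg:
  assumes "pd_kernel N k" "a \<in> space N"
  shows "0 \<le> k a a"
  using pd_sum[OF assms(1), of 1 "\<lambda>_. a" "\<lambda>_. 1"] assms(2) by simp

lemma pd_bound:
  fixes k :: "'y \<Rightarrow> 'y \<Rightarrow> real"
  assumes "pd_kernel N k" "a \<in> space N" "b \<in> space N"
  shows "\<bar>k a b\<bar> \<le> (k a a + k b b) / 2"
proof -
  have sym: "k b a = k a b" using assms unfolding pd_kernel_def by blast
  define y where "y = (\<lambda>i::nat. if i = 0 then a else b)"
  have y: "\<forall>i<2. y i \<in> space N" using assms by (auto simp: y_def)
  have 1: "0 \<le> (\<Sum>i<2. \<Sum>j<2. (\<lambda>i. if i = 0 then 1 else -1::real) i * (\<lambda>i. if i = 0 then 1 else -1::real) j * k (y i) (y j))"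
    by (rule pd_sum[OF assms(1) y])
  have 2: "0 \<le> (\<Sum>i<2. \<Sum>j<2. (\<lambda>i. 1::real) i * (\<lambda>i. 1::real) j * k (y i) (y j))"
    by (rule pd_sum[OF assms(1) y])
  have "0 \<le> k a a - 2 * k a b + k b b" using 1 sym by (simp add: y_def numeral_2_eq_2)
  moreover have "0 \<le> k a a + 2 * k a b + k b b" using 2 sym by (simp add: y_def numeral_2_eq_2)
  ultimately show ?thesis by (simp add: abs_le_iff field_simps)
qed




lemma integral_measurable_kernel2:
  fixes f :: "'l \<Rightarrow> 'n \<Rightarrow> real"
  assumes f[measurable]: "(\<lambda>(x, y). f x y) \<in> borel_measurable (L \<Otimes>\<^sub>M N)"
  assumes K[measurable]: "K \<in> measurable L (subprob_algebra N)"
  shows "(\<lambda>x. \<integral>y. f x y \<partial>K x) \<in> borel_measurable L"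
proof -
  note integral_measurable_subprob_algebra[measurable]
  note measurable_distr2[measurable]
  have "(\<lambda>x. integral\<^sup>L (distr (K x) (L \<Otimes>\<^sub>M N) (\<lambda>y. (x, y))) (\<lambda>(x, y). f x y)) \<in> borel_measurable L"
    by measurable
  then show ?thesis
    by (rule measurable_cong[THEN iffD1, rotated])
       (subst integral_distr, auto simp: space_subprob_algebra dest!: measurable_space[OF K])
qed

lemma kernel_integral:
  fixes f :: "'x \<Rightarrow> 'y \<Rightarrow> real"
  assumes K[measurable]: "K \<in> measurable \<mu> (subprob_algebra N)"
    and f[measurable]: "(\<lambda>(x, y). f x y) \<in> borel_measurable (\<mu> \<Otimes>\<^sub>M N)"
    and fin: "(\<integral>\<^sup>+x. \<integral>\<^sup>+y. ennreal \<bar>f x y\<bar> \<partial>K x \<partial>\<mu>) < \<infinity>"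
  shows "AE x in \<mu>. integrable (K x) (f x)"
    and "integrable \<mu> (\<lambda>x. \<integral>y. f x y \<partial>K x)"
    and "(\<integral>x. \<integral>y. f x y \<partial>K x \<partial>\<mu>) =
           enn2real (\<integral>\<^sup>+x. \<integral>\<^sup>+y. ennreal (f x y) \<partial>K x \<partial>\<mu>)
         - enn2real (\<integral>\<^sup>+x. \<integral>\<^sup>+y. ennreal (- f x y) \<partial>K x \<partial>\<mu>)"
proof -
  note nn_integral_measurable_subprob_algebra2[measurable]
  define a where "a x = (\<integral>\<^sup>+y. ennreal (f x y) \<partial>K x)" for x
  define b where "b x = (\<integral>\<^sup>+y. ennreal (- f x y) \<partial>K x)" for x
  have am[measurable]: "a \<in> borel_measurable \<mu>" unfolding a_def by measurable
  have bm[measurable]: "b \<in> borel_measurable \<mu>" unfolding b_def by measurable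
  have sK: "sets (K x) = sets N" if "x \<in> space \<mu>" for x
    using measurable_space[OF K that] by (simp add: space_subprob_algebra)
  have fxm[measurable]: "f x \<in> borel_measurable (K x)" if "x \<in> space \<mu>" for x
    using that by (simp add: measurable_cong_sets[OF sK[OF that] refl])
  have absab: "(\<integral>\<^sup>+y. ennreal \<bar>f x y\<bar> \<partial>K x) = a x + b x" if "x \<in> space \<mu>" for x
  proof -
    have "(\<integral>\<^sup>+y. ennreal \<bar>f x y\<bar> \<partial>K x) = (\<integral>\<^sup>+y. ennreal (f x y) + ennreal (- f x y) \<partial>K x)"
      by (intro nn_integral_cong) (auto simp: abs_real_def ennreal_neg)
    also have "\<dots> = a x + b x" unfolding a_def b_def
      by (rule nn_integral_add) (use that in auto)
    finally show ?thesis .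
  qed
  have "(\<integral>\<^sup>+x. a x + b x \<partial>\<mu>) < \<infinity>"
    using fin by (subst (asm) nn_integral_cong[OF absab]) auto
  then have ia: "(\<integral>\<^sup>+x. a x \<partial>\<mu>) < \<infinity>" and ib: "(\<integral>\<^sup>+x. b x \<partial>\<mu>) < \<infinity>"
    by (simp_all add: nn_integral_add)
  have AEa: "AE x in \<mu>. a x \<noteq> \<infinity>" using ia by (intro nn_integral_PInf_AE) auto
  have AEb: "AE x in \<mu>. b x \<noteq> \<infinity>" using ib by (intro nn_integral_PInf_AE) auto
  have AEint: "AE x in \<mu>. integrable (K x) (f x) \<and> (\<integral>y. f x y \<partial>K x) = enn2real (a x) - enn2real (b x)"
    using AE_space AEa AEb
  proof eventually_elim
    case (elim x)
    have i: "integrable (K x) (f x)"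
    proof (rule integrableI_bounded)
      show "f x \<in> borel_measurable (K x)" using elim by simp
      show "(\<integral>\<^sup>+y. ennreal (norm (f x y)) \<partial>K x) < \<infinity>"
        using absab[of x] elim by (simp add: less_top)
    qed
    then show ?case unfolding a_def b_def by (simp add: real_lebesgue_integral_def)
  qed
  then show "AE x in \<mu>. integrable (K x) (f x)" by auto
  have ra: "integrable \<mu> (\<lambda>x. enn2real (a x))" and ea: "(\<integral>x. enn2real (a x) \<partial>\<mu>) = enn2real (\<integral>\<^sup>+x. a x \<partial>\<mu>)"
    if am': "a \<in> borel_measurable \<mu>" and ia': "(\<integral>\<^sup>+x. a x \<partial>\<mu>) < \<infinity>" and AEa': "AE x in \<mu>. a x \<noteq> \<infinity>" for a
  proof -
    have eq: "(\<integral>\<^sup>+x. ennreal (enn2real (a x)) \<partial>\<mu>) = (\<integral>\<^sup>+x. a x \<partial>\<mu>)"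
      using AEa' by (intro nn_integral_cong_AE) (auto simp: less_top)
    show "integrable \<mu> (\<lambda>x. enn2real (a x))"
      using am' ia' eq by (intro integrableI_bounded) auto
    show "(\<integral>x. enn2real (a x) \<partial>\<mu>) = enn2real (\<integral>\<^sup>+x. a x \<partial>\<mu>)"
      using am' eq by (subst integral_eq_nn_integral) auto
  qed
  have int2: "integrable \<mu> (\<lambda>x. enn2real (a x) - enn2real (b x))"
    using ra[OF am ia AEa] ra[OF bm ib AEb] by auto
  have eqAE: "AE x in \<mu>. (\<integral>y. f x y \<partial>K x) = enn2real (a x) - enn2real (b x)"
    using AEint by auto
  have meas: "(\<lambda>x. \<integral>y. f x y \<partial>K x) \<in> borel_measurable \<mu>"
    by (rule integral_measurable_kernel2[OF f K])
  show "integrable \<mu> (\<lambda>x. \<integral>y. f x y \<partial>K x)"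
    using int2 meas eqAE by (subst integrable_cong_AE) auto
  have "(\<integral>x. \<integral>y. f x y \<partial>K x \<partial>\<mu>) = (\<integral>x. enn2real (a x) - enn2real (b x) \<partial>\<mu>)"
    using meas eqAE by (intro integral_cong_AE) auto
  also have "\<dots> = (\<integral>x. enn2real (a x) \<partial>\<mu>) - (\<integral>x. enn2real (b x) \<partial>\<mu>)"
    using ra[OF am ia AEa] ra[OF bm ib AEb] by (rule Bochner_Integration.integral_diff)
  also have "\<dots> = enn2real (\<integral>\<^sup>+x. a x \<partial>\<mu>) - enn2real (\<integral>\<^sup>+x. b x \<partial>\<mu>)"
    using ea[OF am ia AEa] ea[OF bm ib AEb] by simp
  finally show "(\<integral>x. \<integral>y. f x y \<partial>K x \<partial>\<mu>) =
           enn2real (\<integral>\<^sup>+x. \<integral>\<^sup>+y. ennreal (f x y) \<partial>K x \<partial>\<mu>)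
         - enn2real (\<integral>\<^sup>+x. \<integral>\<^sup>+y. ennreal (- f x y) \<partial>K x \<partial>\<mu>)"
    unfolding a_def b_def .
qed




lemma cond_law_nn:
  fixes g :: "'b \<times> 'y \<Rightarrow> ennreal"
  assumes P: "prob_space P"
    and W[measurable]: "W \<in> P \<rightarrow>\<^sub>M SW" and Z[measurable]: "Z \<in> P \<rightarrow>\<^sub>M N"
    and cl: "is_cond_law P SW W N Z K"
    and g[measurable]: "g \<in> borel_measurable (SW \<Otimes>\<^sub>M N)"
  shows "(\<integral>\<^sup>+\<omega>. g (W \<omega>, Z \<omega>) \<partial>P) = (\<integral>\<^sup>+x. \<integral>\<^sup>+y. g (x, y) \<partial>K x \<partial>distr P SW W)"
proof -
  interpret prob_space P by fact
  define \<mu> where "\<mu> = distr P SW W"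
  have Kp: "K \<in> SW \<rightarrow>\<^sub>M prob_algebra N"
    and eqR: "\<And>S T. S \<in> sets SW \<Longrightarrow> T \<in> sets N \<Longrightarrow> measure P {\<omega>\<in>space P. W \<omega> \<in> S \<and> Z \<omega> \<in> T}
        = (\<integral>x. indicator S x * measure (K x) T \<partial>\<mu>)"
    using cl unfolding is_cond_law_def \<mu>_def by auto
  have K[measurable]: "K \<in> SW \<rightarrow>\<^sub>M subprob_algebra N" using Kp by (rule measurable_prob_algebraD)
  have Kx: "x \<in> space SW \<Longrightarrow> sets (K x) = sets N \<and> prob_space (K x)" for x
    using measurable_space[OF Kp] by (auto simp: space_prob_algebra)
  define Kq where "Kq x = distr (K x) (SW \<Otimes>\<^sub>M N) (\<lambda>y. (x, y))" for x
  have Kq[measurable]: "Kq \<in> SW \<rightarrow>\<^sub>M subprob_algebra (SW \<Otimes>\<^sub>M N)"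
    unfolding Kq_def by (rule measurable_distr2[OF _ K]) (simp add: split_beta')
  have ne: "space SW \<noteq> {}"
    using measurable_space[OF W] not_empty by blast
  have smu[simp]: "space \<mu> = space SW" "sets \<mu> = sets SW" by (auto simp: \<mu>_def)
  have Kqmu: "Kq \<in> \<mu> \<rightarrow>\<^sub>M subprob_algebra (SW \<Otimes>\<^sub>M N)"
    using Kq by (simp add: measurable_cong_sets[OF smu(2) refl])
  have sKq: "x \<in> space \<mu> \<Longrightarrow> sets (Kq x) = sets (SW \<Otimes>\<^sub>M N)" for x by (simp add: Kq_def)
  have pairm: "(\<lambda>y. (x, y)) \<in> K x \<rightarrow>\<^sub>M SW \<Otimes>\<^sub>M N" if x: "x \<in> space SW" for x
  proof -
    have "(\<lambda>y. (x, y)) \<in> N \<rightarrow>\<^sub>M SW \<Otimes>\<^sub>M N" by (rule measurable_Pair1'[OF x])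
    then show ?thesis using measurable_cong_sets[of "K x" N "SW \<Otimes>\<^sub>M N" "SW \<Otimes>\<^sub>M N"] Kx[OF x] by simp
  qed
  have eqQ: "distr P (SW \<Otimes>\<^sub>M N) (\<lambda>\<omega>. (W \<omega>, Z \<omega>)) = \<mu> \<bind> Kq"
  proof (rule measure_eqI_generator_eq[OF Int_stable_pair_measure_generator[of SW N]])
    show "{a \<times> b |a b. a \<in> sets SW \<and> b \<in> sets N} \<subseteq> Pow (space SW \<times> space N)"
      using sets.space_closed[of SW] sets.space_closed[of N] by auto
    show "sets (distr P (SW \<Otimes>\<^sub>M N) (\<lambda>\<omega>. (W \<omega>, Z \<omega>))) = sigma_sets (space SW \<times> space N) {a \<times> b |a b. a \<in> sets SW \<and> b \<in> sets N}"
      by (simp add: sets_pair_measure)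
    show "sets (\<mu> \<bind> Kq) = sigma_sets (space SW \<times> space N) {a \<times> b |a b. a \<in> sets SW \<and> b \<in> sets N}"
      using ne by (subst sets_bind[OF sKq]) (auto simp: sets_pair_measure)
    show "range (\<lambda>_. space SW \<times> space N) \<subseteq> {a \<times> b |a b. a \<in> sets SW \<and> b \<in> sets N}" by auto
    show "(\<Union>i. space SW \<times> space N) = space SW \<times> space N" by simp
    show "emeasure (distr P (SW \<Otimes>\<^sub>M N) (\<lambda>\<omega>. (W \<omega>, Z \<omega>))) (space SW \<times> space N) \<noteq> \<infinity>"
      by (simp add: emeasure_distr)
  next
    fix X assume "X \<in> {a \<times> b |a b. a \<in> sets SW \<and> b \<in> sets N}"
    then obtain S T where X: "X = S \<times> T" and S: "S \<in> sets SW" and T: "T \<in> sets N" by auto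
    have "emeasure (distr P (SW \<Otimes>\<^sub>M N) (\<lambda>\<omega>. (W \<omega>, Z \<omega>))) X = emeasure P {\<omega>\<in>space P. W \<omega> \<in> S \<and> Z \<omega> \<in> T}"
      using S T X by (subst emeasure_distr) (auto intro!: arg_cong[where f="emeasure P"])
    also have "\<dots> = ennreal (\<integral>x. indicator S x * measure (K x) T \<partial>\<mu>)"
      using S T by (simp add: emeasure_eq_measure eqR)
    also have "\<dots> = (\<integral>\<^sup>+x. ennreal (indicator S x * measure (K x) T) \<partial>\<mu>)"
    proof (rule nn_integral_eq_integral[symmetric])
      interpret mu: prob_space \<mu> unfolding \<mu>_def by (rule prob_space_distr) simp
      show "integrable \<mu> (\<lambda>x. indicator S x * measure (K x) T)"
      proof (intro mu.integrable_const_bound[where B=1])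
        have m1[measurable]: "(\<lambda>x. measure (K x) T) \<in> borel_measurable SW"
          using measurable_compose[OF Kp measurable_measure_prob_algebra[OF T]] .
        have "(\<lambda>x. indicator S x * measure (K x) T) \<in> borel_measurable SW"
          by (intro borel_measurable_times borel_measurable_indicator S m1)
        then show "(\<lambda>x. indicator S x * measure (K x) T) \<in> borel_measurable \<mu>"
          by (simp add: measurable_cong_sets[OF smu(2) refl])
        show "AE x in \<mu>. norm (indicator S x * measure (K x) T) \<le> 1"
        proof (rule AE_I2)
          fix x assume "x \<in> space \<mu>"
          then have "prob_space (K x)" using Kx by auto
          then have "measure (K x) T \<le> 1" "0 \<le> measure (K x) T" by (simp_all add: prob_space.prob_le_1)
          then show "norm (indicator S x * measure (K x) T) \<le> 1"
            by (simp add: indicator_def)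
        qed
      qed
      show "AE x in \<mu>. 0 \<le> indicator S x * measure (K x) T" by auto
    qed
    also have "\<dots> = (\<integral>\<^sup>+x. emeasure (Kq x) X \<partial>\<mu>)"
    proof (rule nn_integral_cong)
      fix x assume x: "x \<in> space \<mu>"
      have Kxs: "sets (K x) = sets N" and Kxp: "prob_space (K x)" using Kx x by auto
      have sp: "space (K x) = space N" by (rule sets_eq_imp_space_eq[OF Kxs])
      have pre: "(\<lambda>y. (x, y)) -` X \<inter> space (K x) = (if x \<in> S then T else {})"
        using X sp sets.sets_into_space[OF T] by auto
      have "emeasure (Kq x) X = emeasure (K x) ((\<lambda>y. (x, y)) -` X \<inter> space (K x))"
        unfolding Kq_def using x X S T pairm[of x] by (subst emeasure_distr) auto
      also have "\<dots> = indicator S x * emeasure (K x) T"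
        unfolding pre by (simp add: indicator_def)
      finally show "ennreal (indicator S x * measure (K x) T) = emeasure (Kq x) X"
        by (simp add: finite_measure.emeasure_eq_measure[OF prob_space.finite_measure[OF Kxp]] indicator_def)
    qed
    also have "\<dots> = emeasure (\<mu> \<bind> Kq) X"
      using X S T ne Kqmu by (subst emeasure_bind[where N="SW \<Otimes>\<^sub>M N"]) auto
    finally show "emeasure (distr P (SW \<Otimes>\<^sub>M N) (\<lambda>\<omega>. (W \<omega>, Z \<omega>))) X = emeasure (\<mu> \<bind> Kq) X" .
  qed
  have "(\<integral>\<^sup>+\<omega>. g (W \<omega>, Z \<omega>) \<partial>P) = (\<integral>\<^sup>+p. g p \<partial>distr P (SW \<Otimes>\<^sub>M N) (\<lambda>\<omega>. (W \<omega>, Z \<omega>)))"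
    by (subst nn_integral_distr) auto
  also have "\<dots> = (\<integral>\<^sup>+x. \<integral>\<^sup>+p. g p \<partial>Kq x \<partial>\<mu>)"
    unfolding eqQ by (rule nn_integral_bind[OF g]) (rule Kqmu)
  also have "\<dots> = (\<integral>\<^sup>+x. \<integral>\<^sup>+y. g (x, y) \<partial>K x \<partial>\<mu>)"
    by (intro nn_integral_cong) (simp add: Kq_def nn_integral_distr pairm)
  finally show ?thesis unfolding \<mu>_def .
qed




lemma cond_law_integral:
  fixes f :: "'b \<Rightarrow> 'y \<Rightarrow> real"
  assumes P: "prob_space P"
    and W[measurable]: "W \<in> P \<rightarrow>\<^sub>M SW" and Z[measurable]: "Z \<in> P \<rightarrow>\<^sub>M N"
    and cl: "is_cond_law P SW W N Z K"
    and f[measurable]: "(\<lambda>(x, y). f x y) \<in> borel_measurable (SW \<Otimes>\<^sub>M N)"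
    and int: "integrable P (\<lambda>\<omega>. f (W \<omega>) (Z \<omega>))"
  shows "AE x in distr P SW W. integrable (K x) (f x)"
    and "integrable (distr P SW W) (\<lambda>x. \<integral>y. f x y \<partial>K x)"
    and "(\<integral>\<omega>. f (W \<omega>) (Z \<omega>) \<partial>P) = (\<integral>x. \<integral>y. f x y \<partial>K x \<partial>distr P SW W)"
proof -
  have Kp: "K \<in> SW \<rightarrow>\<^sub>M prob_algebra N" using cl unfolding is_cond_law_def by auto
  have K: "K \<in> distr P SW W \<rightarrow>\<^sub>M subprob_algebra N"
    using measurable_prob_algebraD[OF Kp] by (simp add: measurable_cong_sets[of "distr P SW W" SW])
  have f': "(\<lambda>(x, y). f x y) \<in> borel_measurable (distr P SW W \<Otimes>\<^sub>M N)"
    using f by (simp add: measurable_cong_sets[OF sets_pair_measure_cong[of "distr P SW W" SW N N] refl])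
  have nn: "(\<integral>\<^sup>+\<omega>. g (f (W \<omega>) (Z \<omega>)) \<partial>P) = (\<integral>\<^sup>+x. \<integral>\<^sup>+y. g (f x y) \<partial>K x \<partial>distr P SW W)"
    if g[measurable]: "g \<in> borel_measurable borel" for g :: "real \<Rightarrow> ennreal"
  proof -
    have "(\<lambda>p. g (f (fst p) (snd p))) \<in> borel_measurable (SW \<Otimes>\<^sub>M N)"
      using measurable_compose[OF f g] by (simp add: split_beta')
    from cond_law_nn[OF P W Z cl this] show ?thesis by simp
  qed
  have fin: "(\<integral>\<^sup>+x. \<integral>\<^sup>+y. ennreal \<bar>f x y\<bar> \<partial>K x \<partial>distr P SW W) < \<infinity>"
    using nn[of "\<lambda>r. ennreal \<bar>r\<bar>"] int by (simp add: integrable_iff_bounded)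
  note ki = kernel_integral[OF K f' fin]
  show "AE x in distr P SW W. integrable (K x) (f x)" by (rule ki(1))
  show "integrable (distr P SW W) (\<lambda>x. \<integral>y. f x y \<partial>K x)" by (rule ki(2))
  show "(\<integral>\<omega>. f (W \<omega>) (Z \<omega>) \<partial>P) = (\<integral>x. \<integral>y. f x y \<partial>K x \<partial>distr P SW W)"
    unfolding ki(3) real_lebesgue_integral_def[OF int]
    using nn[of "\<lambda>r. ennreal r"] nn[of "\<lambda>r. ennreal (- r)"] by simp
qed




lemma pd_integrable:
  fixes k :: "'y \<Rightarrow> 'y \<Rightarrow> real"
  assumes pd: "pd_kernel N k" and km: "case_prod k \<in> borel_measurable (N \<Otimes>\<^sub>M N)"
    and a: "a \<in> M \<rightarrow>\<^sub>M N" and b: "b \<in> M \<rightarrow>\<^sub>M N"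
    and ia: "integrable M (\<lambda>w. k (a w) (a w))" and ib: "integrable M (\<lambda>w. k (b w) (b w))"
  shows "integrable M (\<lambda>w. k (a w) (b w))"
proof (rule Bochner_Integration.integrable_bound)
  show "integrable M (\<lambda>w. (k (a w) (a w) + k (b w) (b w)) / 2)"
    using ia ib by auto
  have "(\<lambda>w. case_prod k (a w, b w)) \<in> borel_measurable M"
    using measurable_compose[OF measurable_Pair[OF a b] km] .
  then show "(\<lambda>w. k (a w) (b w)) \<in> borel_measurable M" by simp
  show "AE w in M. norm (k (a w) (b w)) \<le> norm ((k (a w) (a w) + k (b w) (b w)) / 2)"
  proof (rule AE_I2)
    fix w assume w: "w \<in> space M"
    have aw: "a w \<in> space N" and bw: "b w \<in> space N"
      using measurable_space[OF a w] measurable_space[OF b w] .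
    have "0 \<le> k (a w) (a w)" "0 \<le> k (b w) (b w)"
      using pd_diag_nonneg[OF pd aw] pd_diag_nonneg[OF pd bw] .
    then show "norm (k (a w) (b w)) \<le> norm ((k (a w) (a w) + k (b w) (b w)) / 2)"
      using pd_bound[OF pd aw bw] by simp
  qed
qed

lemma pd_integrable_pair:
  fixes k :: "'y \<Rightarrow> 'y \<Rightarrow> real"
  assumes pd: "pd_kernel N k" and km: "case_prod k \<in> borel_measurable (N \<Otimes>\<^sub>M N)"
    and M1: "prob_space M1" and M2: "prob_space M2"
    and a: "a \<in> M1 \<rightarrow>\<^sub>M N" and b: "b \<in> M2 \<rightarrow>\<^sub>M N"
    and ia: "integrable M1 (\<lambda>w. k (a w) (a w))" and ib: "integrable M2 (\<lambda>w. k (b w) (b w))"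
  shows "integrable (M1 \<Otimes>\<^sub>M M2) (\<lambda>(u, v). k (a u) (b v))"
proof -
  interpret p12: pair_prob_space M1 M2 using M1 M2 by (simp add: pair_prob_space_def pair_sigma_finite_def prob_space_imp_sigma_finite)
  interpret p21: pair_prob_space M2 M1 using M1 M2 by (simp add: pair_prob_space_def pair_sigma_finite_def prob_space_imp_sigma_finite)
  have a': "(\<lambda>p. a (fst p)) \<in> M1 \<Otimes>\<^sub>M M2 \<rightarrow>\<^sub>M N" using a by simp
  have b': "(\<lambda>p. b (snd p)) \<in> M1 \<Otimes>\<^sub>M M2 \<rightarrow>\<^sub>M N" using b by simp
  have Da: "(\<lambda>w. k (a w) (a w)) \<in> borel_measurable M1" using ia by auto
  have Db: "(\<lambda>w. k (b w) (b w)) \<in> borel_measurable M2" using ib by auto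
  have ia': "integrable (M1 \<Otimes>\<^sub>M M2) (\<lambda>p. k (a (fst p)) (a (fst p)))"
    using integrable_distr_eq[of fst "M1 \<Otimes>\<^sub>M M2" M1 "\<lambda>w. k (a w) (a w)"] Da ia
    by (simp add: prob_space.distr_pair_fst[OF M2])
  have "integrable (M2 \<Otimes>\<^sub>M M1) (\<lambda>p. k (b (fst p)) (b (fst p)))"
    using integrable_distr_eq[of fst "M2 \<Otimes>\<^sub>M M1" M2 "\<lambda>w. k (b w) (b w)"] Db ib
    by (simp add: prob_space.distr_pair_fst[OF M1])
  then have ib': "integrable (M1 \<Otimes>\<^sub>M M2) (\<lambda>p. k (b (snd p)) (b (snd p)))"
    using p21.integrable_product_swap[of "\<lambda>p. k (b (fst p)) (b (fst p))"] by (simp add: split_beta')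
  show ?thesis
    using pd_integrable[OF pd km a' b' ia' ib'] by (simp add: split_beta')
qed




lemma integrable_cong_sp:
  "integrable M f \<Longrightarrow> (\<And>x. x \<in> space M \<Longrightarrow> f x = g x) \<Longrightarrow> integrable M g"
  using Bochner_Integration.integrable_cong[of M M f g] by blast

theorem mainTheorem7:
  fixes P :: "'w measure"
    and M :: "nat \<Rightarrow> 'a measure"
    and d :: nat
    and X X' :: "'w \<Rightarrow> nat \<Rightarrow> 'a"
    and \<eta> :: "(nat \<Rightarrow> 'a) \<Rightarrow> 'y"
    and N :: "'y measure"
    and k :: "'y \<Rightarrow> 'y \<Rightarrow> real"
    and A :: "nat set"
    and K :: "(nat \<Rightarrow> 'a) \<Rightarrow> 'y measure"
  assumes P: "prob_space P"
    and X_rv: "X \<in> measurable P (PiM {1..d} M)"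
    and X'_rv: "X' \<in> measurable P (PiM {1..d} M)"
    and X_indep_comp: "prob_space.indep_vars P M (\<lambda>i \<omega>. X \<omega> i) {1..d}"
    and X_X'_indep: "prob_space.indep_var P (PiM {1..d} M) X (PiM {1..d} M) X'"
    and X'_copy: "distr P (PiM {1..d} M) X' = distr P (PiM {1..d} M) X"
    and \<eta>_meas: "\<eta> \<in> measurable (PiM {1..d} M) N"
    and k_meas: "case_prod k \<in> borel_measurable (N \<Otimes>\<^sub>M N)"
    and k_pd: "pd_kernel N k"
    and A: "A \<subseteq> {1..d}"
    and K: "is_cond_law P (PiM A M) (\<lambda>\<omega>. restrict (X \<omega>) A) N (\<lambda>\<omega>. \<eta> (X \<omega>)) K"
    and K_int: "\<forall>x\<in>space (PiM A M). integrable (K x) (\<lambda>y. k y y)"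
    and Y_int: "integrable P (\<lambda>\<omega>. k (\<eta> (X \<omega>)) (\<eta> (X \<omega>)))"
  shows "(\<integral>x. MMD2 k (distr P N (\<lambda>\<omega>. \<eta> (X \<omega>))) (K x)
              \<partial>(distr P (PiM A M) (\<lambda>\<omega>. restrict (X \<omega>) A)))
         = (\<integral>\<omega>. k (\<eta> (X \<omega>))
                   (\<eta> (\<lambda>i\<in>{1..d}. if i \<in> A then X \<omega> i else X' \<omega> i)) \<partial>P)
           - (\<integral>\<omega>. k (\<eta> (X \<omega>)) (\<eta> (X' \<omega>)) \<partial>P)"
proof -
  interpret prob_space P by (rule P)
  define B where "B = {1..d} - A"
  have AB: "A \<inter> B = {}" "A \<union> B = {1..d}" "B \<subseteq> {1..d}" using A by (auto simp: B_def)
  define XA where "XA = (\<lambda>\<omega>. restrict (X \<omega>) A)"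
  define XB where "XB = (\<lambda>\<omega>. restrict (X \<omega>) B)"
  define X'B where "X'B = (\<lambda>\<omega>. restrict (X' \<omega>) B)"
  define Y where "Y = (\<lambda>\<omega>. \<eta> (X \<omega>))"
  define Y' where "Y' = (\<lambda>\<omega>. \<eta> (X' \<omega>))"
  define YA where "YA = (\<lambda>\<omega>. \<eta> (\<lambda>i\<in>{1..d}. if i \<in> A then X \<omega> i else X' \<omega> i))"
  define \<mu> where "\<mu> = distr P (PiM A M) XA"
  define \<nu> where "\<nu> = distr P (PiM B M) XB"
  define PY where "PY = distr P N Y"
  define PX where "PX = distr P (PiM {1..d} M) X"
  define g where "g = (\<lambda>p. \<eta> (merge A B p))"
  define D where "D = (\<lambda>y. k y y)"
  define c where "c = (\<integral>\<omega>. k (Y \<omega>) (Y' \<omega>) \<partial>P)"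
  define e where "e = (\<integral>\<omega>. k (Y \<omega>) (YA \<omega>) \<partial>P)"
  define T2 where "T2 = (\<lambda>x. \<integral>z. case_prod k z \<partial>(PY \<Otimes>\<^sub>M K x))"
  define T3 where "T3 = (\<lambda>x. \<integral>z. case_prod k z \<partial>(K x \<Otimes>\<^sub>M K x))"

  have XAm: "XA \<in> P \<rightarrow>\<^sub>M PiM A M"
    unfolding XA_def by (rule measurable_compose[OF X_rv measurable_restrict_subset[OF A]])
  have XBm: "XB \<in> P \<rightarrow>\<^sub>M PiM B M"
    unfolding XB_def by (rule measurable_compose[OF X_rv measurable_restrict_subset[OF AB(3)]])
  have X'Bm: "X'B \<in> P \<rightarrow>\<^sub>M PiM B M"
    unfolding X'B_def by (rule measurable_compose[OF X'_rv measurable_restrict_subset[OF AB(3)]])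
  have Ym: "Y \<in> P \<rightarrow>\<^sub>M N" unfolding Y_def by (rule measurable_compose[OF X_rv \<eta>_meas])
  have Y'm: "Y' \<in> P \<rightarrow>\<^sub>M N" unfolding Y'_def by (rule measurable_compose[OF X'_rv \<eta>_meas])
  have gm: "g \<in> PiM A M \<Otimes>\<^sub>M PiM B M \<rightarrow>\<^sub>M N"
    unfolding g_def using measurable_compose[OF measurable_merge[of A B M] \<eta>_meas[folded AB(2)]] .
  have Dm: "D \<in> borel_measurable N"
  proof -
    have pp: "(\<lambda>y. (y, y)) \<in> N \<rightarrow>\<^sub>M N \<Otimes>\<^sub>M N" by (intro measurable_Pair measurable_ident_sets refl)
    have "(\<lambda>y. case_prod k (y, y)) \<in> borel_measurable N"
      by (rule measurable_compose[OF pp k_meas])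
    then show ?thesis by (simp add: D_def)
  qed
  have Xsp: "X \<omega> \<in> space (PiM {1..d} M)" if "\<omega> \<in> space P" for \<omega>
    using measurable_space[OF X_rv that] .
  have Y_eq: "Y \<omega> = g (XA \<omega>, XB \<omega>)" if "\<omega> \<in> space P" for \<omega>
  proof -
    have "X \<omega> \<in> extensional {1..d}" using Xsp[OF that] by (simp add: space_PiM PiE_def)
    then have "merge A B (XA \<omega>, XB \<omega>) = X \<omega>"
      using AB by (auto simp: merge_def XA_def XB_def extensional_def fun_eq_iff)
    then show ?thesis by (simp add: Y_def g_def)
  qed
  have YA_eq: "YA \<omega> = g (XA \<omega>, X'B \<omega>)" if "\<omega> \<in> space P" for \<omega>
  proof -
    have "merge A B (XA \<omega>, X'B \<omega>) = (\<lambda>i\<in>{1..d}. if i \<in> A then X \<omega> i else X' \<omega> i)"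
      using AB by (auto simp: merge_def XA_def X'B_def fun_eq_iff)
    then show ?thesis by (simp add: YA_def g_def)
  qed
  have YAm: "YA \<in> P \<rightarrow>\<^sub>M N"
  proof -
    have "(\<lambda>\<omega>. g (XA \<omega>, X'B \<omega>)) \<in> P \<rightarrow>\<^sub>M N"
      by (rule measurable_compose[OF measurable_Pair[OF XAm X'Bm] gm])
    then show ?thesis by (rule measurable_cong[THEN iffD1, rotated]) (simp add: YA_eq)
  qed
  have p\<mu>: "prob_space \<mu>" unfolding \<mu>_def using XAm by (rule prob_space_distr)
  have p\<nu>: "prob_space \<nu>" unfolding \<nu>_def using XBm by (rule prob_space_distr)
  have pPY: "prob_space PY" unfolding PY_def using Ym by (rule prob_space_distr)
  have pPX: "prob_space PX" unfolding PX_def using X_rv by (rule prob_space_distr)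
  have s\<mu>[simp]: "sets \<mu> = sets (PiM A M)" "space \<mu> = space (PiM A M)" by (simp_all add: \<mu>_def)
  have s\<nu>[simp]: "sets \<nu> = sets (PiM B M)" "space \<nu> = space (PiM B M)" by (simp_all add: \<nu>_def)
  have sPY[simp]: "sets PY = sets N" "space PY = space N" by (simp_all add: PY_def)
  have sPX[simp]: "sets PX = sets (PiM {1..d} M)" "space PX = space (PiM {1..d} M)" by (simp_all add: PX_def)
  have Kp: "K \<in> PiM A M \<rightarrow>\<^sub>M prob_algebra N" using K unfolding is_cond_law_def by auto
  have Kx: "sets (K x) = sets N" "space (K x) = space N" "prob_space (K x)" if "x \<in> space (PiM A M)" for x
  proof -
    show 1: "sets (K x) = sets N" "prob_space (K x)"
      using measurable_space[OF Kp that] by (auto simp: space_prob_algebra)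
    show "space (K x) = space N" by (rule sets_eq_imp_space_eq[OF 1(1)])
  qed
  have Ksub: "K \<in> PiM A M \<rightarrow>\<^sub>M subprob_algebra N" by (rule measurable_prob_algebraD[OF Kp])

  have law1: "distr P (PiM A M \<Otimes>\<^sub>M PiM B M) (\<lambda>\<omega>. (XA \<omega>, XB \<omega>)) = \<mu> \<Otimes>\<^sub>M \<nu>"
  proof -
    have "indep_var (PiM A M) XA (PiM B M) XB"
      using indep_var_restrict[OF X_indep_comp AB(1) A AB(3)] by (simp add: XA_def XB_def)
    then show ?thesis unfolding \<mu>_def \<nu>_def by (simp add: indep_var_distribution_eq)
  qed
  have \<nu>': "distr P (PiM B M) X'B = \<nu>"
  proof -
    have "distr P (PiM B M) X'B = distr (distr P (PiM {1..d} M) X') (PiM B M) (\<lambda>f. restrict f B)"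
      by (subst distr_distr[OF measurable_restrict_subset[OF AB(3)] X'_rv]) (simp add: X'B_def comp_def)
    also have "\<dots> = distr (distr P (PiM {1..d} M) X) (PiM B M) (\<lambda>f. restrict f B)" unfolding X'_copy by (rule refl)
    also have "\<dots> = \<nu>"
      by (subst distr_distr[OF measurable_restrict_subset[OF AB(3)] X_rv]) (simp add: \<nu>_def XB_def comp_def)
    finally show ?thesis .
  qed
  have PY': "distr P N Y' = PY"
  proof -
    have "distr P N Y' = distr (distr P (PiM {1..d} M) X') N \<eta>"
      by (subst distr_distr[OF \<eta>_meas X'_rv]) (simp add: Y'_def comp_def)
    also have "\<dots> = distr (distr P (PiM {1..d} M) X) N \<eta>" unfolding X'_copy by (rule refl)
    also have "\<dots> = PY"
      by (subst distr_distr[OF \<eta>_meas X_rv]) (simp add: PY_def Y_def comp_def)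
    finally show ?thesis .
  qed
  have law3: "distr P (PiM A M \<Otimes>\<^sub>M PiM B M) (\<lambda>\<omega>. (XA \<omega>, X'B \<omega>)) = \<mu> \<Otimes>\<^sub>M \<nu>"
  proof -
    have "indep_var (PiM A M) ((\<lambda>f. restrict f A) \<circ> X) (PiM B M) ((\<lambda>f. restrict f B) \<circ> X')"
      by (rule indep_var_compose[OF X_X'_indep measurable_restrict_subset[OF A] measurable_restrict_subset[OF AB(3)]])
    then have "indep_var (PiM A M) XA (PiM B M) X'B" by (simp add: XA_def X'B_def comp_def)
    then show ?thesis using \<nu>' unfolding \<mu>_def by (simp add: indep_var_distribution_eq)
  qed
  have law4: "distr P (PiM {1..d} M \<Otimes>\<^sub>M PiM B M) (\<lambda>\<omega>. (X \<omega>, X'B \<omega>)) = PX \<Otimes>\<^sub>M \<nu>"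
  proof -
    have "indep_var (PiM {1..d} M) ((\<lambda>f. f) \<circ> X) (PiM B M) ((\<lambda>f. restrict f B) \<circ> X')"
      by (rule indep_var_compose[OF X_X'_indep measurable_ident_sets[OF refl] measurable_restrict_subset[OF AB(3)]])
    then have "indep_var (PiM {1..d} M) X (PiM B M) X'B" by (simp add: X'B_def comp_def)
    then show ?thesis using \<nu>' unfolding PX_def by (simp add: indep_var_distribution_eq)
  qed
  have lawY: "distr P (N \<Otimes>\<^sub>M N) (\<lambda>\<omega>. (Y \<omega>, Y' \<omega>)) = PY \<Otimes>\<^sub>M PY"
  proof -
    have "indep_var N (\<eta> \<circ> X) N (\<eta> \<circ> X')"
      by (rule indep_var_compose[OF X_X'_indep \<eta>_meas \<eta>_meas])
    then have "indep_var N Y N Y'" by (simp add: Y_def Y'_def comp_def)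
    then show ?thesis using PY' unfolding PY_def by (simp add: indep_var_distribution_eq)
  qed
  have Dg_m: "(\<lambda>p. D (g p)) \<in> borel_measurable (PiM A M \<Otimes>\<^sub>M PiM B M)"
    by (rule measurable_compose[OF gm Dm])
  have iDY: "integrable P (\<lambda>\<omega>. D (Y \<omega>))" using Y_int by (simp add: D_def Y_def)
  have iDPY: "integrable PY D" unfolding PY_def using iDY by (simp add: integrable_distr_eq[OF Ym Dm])
  have iDg: "integrable (\<mu> \<Otimes>\<^sub>M \<nu>) (\<lambda>p. D (g p))"
  proof -
    have "integrable P (\<lambda>\<omega>. D (g (XA \<omega>, XB \<omega>)))"
      using iDY by (rule integrable_cong_sp) (simp add: Y_eq)
    then show ?thesis unfolding law1[symmetric]
      by (simp add: integrable_distr_eq[OF measurable_Pair[OF XAm XBm] Dg_m])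
  qed
  have iDYA: "integrable P (\<lambda>\<omega>. D (YA \<omega>))"
  proof -
    have "integrable P (\<lambda>\<omega>. D (g (XA \<omega>, X'B \<omega>)))"
      using iDg unfolding law3[symmetric]
      by (simp add: integrable_distr_eq[OF measurable_Pair[OF XAm X'Bm] Dg_m])
    then show ?thesis
      by (rule integrable_cong_sp) (simp add: YA_eq)
  qed
  have iDY': "integrable P (\<lambda>\<omega>. D (Y' \<omega>))"
    using iDPY unfolding PY'[symmetric] by (simp add: integrable_distr_eq[OF Y'm Dm])
  have int_c: "integrable P (\<lambda>\<omega>. k (Y \<omega>) (Y' \<omega>))"
    by (rule pd_integrable[OF k_pd k_meas Ym Y'm]) (use iDY iDY' in \<open>simp_all add: D_def\<close>)
  have int_e: "integrable P (\<lambda>\<omega>. k (Y \<omega>) (YA \<omega>))"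
    by (rule pd_integrable[OF k_pd k_meas Ym YAm]) (use iDY iDYA in \<open>simp_all add: D_def\<close>)
  have iDK: "integrable (K x) D" if "x \<in> space (PiM A M)" for x
    using K_int that by (simp add: D_def)
  have idN: "(\<lambda>y. y) \<in> Q \<rightarrow>\<^sub>M N" if "sets Q = sets N" for Q :: "'y measure"
    by (rule measurable_ident_sets[OF that])
  have K': "is_cond_law P (PiM A M) XA N Y K" using K by (simp add: XA_def Y_def)

  have cc: "(\<integral>z. case_prod k z \<partial>(PY \<Otimes>\<^sub>M PY)) = c"
  proof -
    have "(\<integral>z. case_prod k z \<partial>(PY \<Otimes>\<^sub>M PY)) = (\<integral>z. case_prod k z \<partial>distr P (N \<Otimes>\<^sub>M N) (\<lambda>\<omega>. (Y \<omega>, Y' \<omega>)))"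
      by (simp add: lawY)
    also have "\<dots> = c" unfolding c_def
      by (subst integral_distr[OF measurable_Pair[OF Ym Y'm] k_meas]) simp
    finally show ?thesis .
  qed
  define \<phi> where "\<phi> = (\<lambda>y'. \<integral>y. k y y' \<partial>PY)"
  have kswap: "(\<lambda>p. k (snd p) (fst p)) \<in> borel_measurable (N \<Otimes>\<^sub>M N)"
    using measurable_compose[OF measurable_Pair[OF measurable_snd measurable_fst] k_meas] by simp
  have \<phi>m: "\<phi> \<in> borel_measurable N"
  proof -
    interpret sf: sigma_finite_measure PY using pPY by (rule prob_space_imp_sigma_finite)
    have "(\<lambda>(y', y). k y y') \<in> borel_measurable (N \<Otimes>\<^sub>M PY)"
      using kswap by (simp add: split_beta' measurable_cong_sets[OF sets_pair_measure_cong[OF refl sPY(1)] refl])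
    then show ?thesis unfolding \<phi>_def by (rule sf.borel_measurable_lebesgue_integral)
  qed
  have pairPY: "pair_sigma_finite PY Q" if "prob_space Q" for Q
    using pPY that by (simp add: pair_sigma_finite_def prob_space_imp_sigma_finite)
  have iPYPY: "integrable (PY \<Otimes>\<^sub>M PY) (case_prod k)"
    using pd_integrable_pair[OF k_pd k_meas pPY pPY idN[OF sPY(1)] idN[OF sPY(1)]] iDPY
    by (simp add: D_def)
  have i\<phi>: "integrable PY \<phi>" and e\<phi>: "(\<integral>y'. \<phi> y' \<partial>PY) = c"
  proof -
    interpret pp: pair_sigma_finite PY PY by (rule pairPY[OF pPY])
    show "integrable PY \<phi>" unfolding \<phi>_def using pp.integrable_snd[OF iPYPY] .
    show "(\<integral>y'. \<phi> y' \<partial>PY) = c" unfolding \<phi>_def using pp.integral_snd[OF iPYPY] cc by simp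
  qed
  have T2_eq: "T2 x = (\<integral>y'. \<phi> y' \<partial>K x)" if x: "x \<in> space (PiM A M)" for x
  proof -
    interpret pp: pair_sigma_finite PY "K x" by (rule pairPY[OF Kx(3)[OF x]])
    have "integrable (PY \<Otimes>\<^sub>M K x) (case_prod k)"
      using pd_integrable_pair[OF k_pd k_meas pPY Kx(3)[OF x] idN[OF sPY(1)] idN[OF Kx(1)[OF x]]] iDPY iDK[OF x]
      by (simp add: D_def)
    from pp.integral_snd[OF this] show ?thesis unfolding T2_def \<phi>_def by simp
  qed
  have \<phi>m2: "(\<lambda>(x, y). \<phi> y) \<in> borel_measurable (PiM A M \<Otimes>\<^sub>M N)"
    using measurable_compose[OF measurable_snd \<phi>m] by (simp add: split_beta')
  have i\<phi>Y: "integrable P (\<lambda>\<omega>. \<phi> (Y \<omega>))"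
    using i\<phi> unfolding PY_def by (simp add: integrable_distr_eq[OF Ym \<phi>m])
  note cl\<phi> = cond_law_integral[OF P XAm Ym K' \<phi>m2 i\<phi>Y]
  have iT2: "integrable \<mu> T2"
    using cl\<phi>(2) unfolding \<mu>_def[symmetric] by (rule integrable_cong_sp) (simp add: T2_eq)
  have eT2: "(\<integral>x. T2 x \<partial>\<mu>) = c"
  proof -
    have "(\<integral>x. T2 x \<partial>\<mu>) = (\<integral>x. \<integral>y'. \<phi> y' \<partial>K x \<partial>\<mu>)"
      by (rule Bochner_Integration.integral_cong) (simp_all add: T2_eq)
    also have "\<dots> = (\<integral>\<omega>. \<phi> (Y \<omega>) \<partial>P)" using cl\<phi>(3) by (simp add: \<mu>_def)
    also have "\<dots> = (\<integral>y'. \<phi> y' \<partial>PY)" unfolding PY_def by (simp add: integral_distr[OF Ym \<phi>m])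
    finally show ?thesis using e\<phi> by simp
  qed
  define \<psi> where "\<psi> = (\<lambda>x y'. \<integral>y. k y y' \<partial>K x)"
  define m where "m = (\<lambda>x. \<integral>y. D y \<partial>K x)"
  have pairK: "pair_sigma_finite (K x) Q" if "x \<in> space (PiM A M)" "prob_space Q" for x Q
    using Kx(3)[OF that(1)] that(2) by (simp add: pair_sigma_finite_def prob_space_imp_sigma_finite)
  have T3_eq: "T3 x = (\<integral>y'. \<psi> x y' \<partial>K x)" if x: "x \<in> space (PiM A M)" for x
  proof -
    interpret pp: pair_sigma_finite "K x" "K x" by (rule pairK[OF x Kx(3)[OF x]])
    have "integrable (K x \<Otimes>\<^sub>M K x) (case_prod k)"
      using pd_integrable_pair[OF k_pd k_meas Kx(3)[OF x] Kx(3)[OF x] idN[OF Kx(1)[OF x]] idN[OF Kx(1)[OF x]]] iDK[OF x]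
      by (simp add: D_def)
    from pp.integral_snd[OF this] show ?thesis unfolding T3_def \<psi>_def by simp
  qed
  have \<psi>m: "(\<lambda>(x, y'). \<psi> x y') \<in> borel_measurable (PiM A M \<Otimes>\<^sub>M N)"
  proof -
    have f1: "(\<lambda>(p, y). k y (snd p)) \<in> borel_measurable ((PiM A M \<Otimes>\<^sub>M N) \<Otimes>\<^sub>M N)"
      using measurable_compose[OF measurable_Pair[OF measurable_snd measurable_compose[OF measurable_fst measurable_snd]] k_meas]
      by (simp add: split_beta')
    have f2: "(\<lambda>p. K (fst p)) \<in> (PiM A M \<Otimes>\<^sub>M N) \<rightarrow>\<^sub>M subprob_algebra N"
      by (rule measurable_compose[OF measurable_fst Ksub])
    from integral_measurable_kernel2[OF f1 f2] show ?thesis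
      by (simp add: \<psi>_def split_beta')
  qed
  have Dm2: "(\<lambda>(x, y). D y) \<in> borel_measurable (PiM A M \<Otimes>\<^sub>M N)"
    using measurable_compose[OF measurable_snd Dm] by (simp add: split_beta')
  note clD = cond_law_integral[OF P XAm Ym K' Dm2 iDY]
  have im: "integrable \<mu> m" using clD(2) by (simp add: m_def \<mu>_def)
  have mm: "m \<in> borel_measurable (PiM A M)"
    using borel_measurable_integrable[OF im] by (simp add: measurable_cong_sets[OF s\<mu>(1) refl])
  have imXA: "integrable P (\<lambda>\<omega>. m (XA \<omega>))"
    using im unfolding \<mu>_def by (simp add: integrable_distr_eq[OF XAm mm])
  have \<psi>bound: "\<bar>\<psi> x y'\<bar> \<le> (m x + D y') / 2" if x: "x \<in> space (PiM A M)" and y': "y' \<in> space N" for x y'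
  proof -
    have c1: "integrable (K x) (\<lambda>w. k y' y')"
      by (rule finite_measure.integrable_const[OF prob_space.finite_measure[OF Kx(3)[OF x]]])
    have c2: "integrable (K x) (\<lambda>y. k y y)" using iDK[OF x] by (simp add: D_def)
    have i1: "integrable (K x) (\<lambda>y. k y y')"
      using pd_integrable[OF k_pd k_meas idN[OF Kx(1)[OF x]] measurable_const[OF y', of "K x"] c2 c1] .
    have c3: "integrable (K x) (\<lambda>w. D y')"
      by (rule finite_measure.integrable_const[OF prob_space.finite_measure[OF Kx(3)[OF x]]])
    have i2: "integrable (K x) (\<lambda>y. (D y + D y') / 2)"
      by (intro integrable_divide Bochner_Integration.integrable_add iDK[OF x] c3)
    have "\<bar>\<psi> x y'\<bar> \<le> (\<integral>y. \<bar>k y y'\<bar> \<partial>K x)"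
      unfolding \<psi>_def using integral_norm_bound[of "K x" "\<lambda>y. k y y'"] by simp
    also have "\<dots> \<le> (\<integral>y. (D y + D y') / 2 \<partial>K x)"
    proof (rule integral_mono)
      show "integrable (K x) (\<lambda>y. \<bar>k y y'\<bar>)" using i1 by simp
      show "integrable (K x) (\<lambda>y. (D y + D y') / 2)" by (rule i2)
      fix y assume "y \<in> space (K x)"
      then have "y \<in> space N" using Kx(2)[OF x] by simp
      then show "\<bar>k y y'\<bar> \<le> (D y + D y') / 2" using pd_bound[OF k_pd _ y'] by (simp add: D_def)
    qed
    also have "\<dots> = (m x + D y') / 2"
      using iDK[OF x] c3 prob_space.prob_space[OF Kx(3)[OF x]] by (simp add: m_def)
    finally show ?thesis .
  qed
  have \<psi>XYm: "(\<lambda>\<omega>. \<psi> (XA \<omega>) (Y \<omega>)) \<in> borel_measurable P"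
    using measurable_compose[OF measurable_Pair[OF XAm Ym] \<psi>m] by simp
  have i\<psi>: "integrable P (\<lambda>\<omega>. \<psi> (XA \<omega>) (Y \<omega>))"
  proof (rule Bochner_Integration.integrable_bound[OF _ \<psi>XYm])
    show "integrable P (\<lambda>\<omega>. (m (XA \<omega>) + D (Y \<omega>)) / 2)" using imXA iDY by simp
    show "AE \<omega> in P. norm (\<psi> (XA \<omega>) (Y \<omega>)) \<le> norm ((m (XA \<omega>) + D (Y \<omega>)) / 2)"
    proof (rule AE_I2)
      fix \<omega> assume w: "\<omega> \<in> space P"
      have xa: "XA \<omega> \<in> space (PiM A M)" and yw: "Y \<omega> \<in> space N"
        using measurable_space[OF XAm w] measurable_space[OF Ym w] .
      have "\<bar>\<psi> (XA \<omega>) (Y \<omega>)\<bar> \<le> (m (XA \<omega>) + D (Y \<omega>)) / 2" by (rule \<psi>bound[OF xa yw])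
      then show "norm (\<psi> (XA \<omega>) (Y \<omega>)) \<le> norm ((m (XA \<omega>) + D (Y \<omega>)) / 2)" by simp
    qed
  qed
  note cl\<psi> = cond_law_integral[where f=\<psi>, OF P XAm Ym K' \<psi>m i\<psi>]
  have iT3: "integrable \<mu> T3"
    using cl\<psi>(2) unfolding \<mu>_def[symmetric] by (rule integrable_cong_sp) (simp add: T3_eq)
  have p\<mu>\<nu>: "pair_sigma_finite \<mu> \<nu>" using p\<mu> p\<nu> by (simp add: pair_sigma_finite_def prob_space_imp_sigma_finite)
  interpret pmn: pair_sigma_finite \<mu> \<nu> by (rule p\<mu>\<nu>)
  define \<Psi> where "\<Psi> = (\<lambda>x z. \<psi> x (g (x, z)))"
  have \<Psi>m: "(\<lambda>(x, z). \<Psi> x z) \<in> borel_measurable (PiM A M \<Otimes>\<^sub>M PiM B M)"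
  proof -
    have "(\<lambda>p. (fst p, g p)) \<in> PiM A M \<Otimes>\<^sub>M PiM B M \<rightarrow>\<^sub>M PiM A M \<Otimes>\<^sub>M N"
      by (rule measurable_Pair[OF measurable_fst gm])
    from measurable_compose[OF this \<psi>m] show ?thesis by (simp add: \<Psi>_def split_beta')
  qed
  have i\<Psi>P: "integrable P (\<lambda>\<omega>. \<Psi> (XA \<omega>) (XB \<omega>))"
    using i\<psi> by (rule integrable_cong_sp) (simp add: \<Psi>_def Y_eq)
  have i\<Psi>: "integrable (\<mu> \<Otimes>\<^sub>M \<nu>) (\<lambda>(x, z). \<Psi> x z)"
    using i\<Psi>P unfolding law1[symmetric] by (simp add: integrable_distr_eq[OF measurable_Pair[OF XAm XBm] \<Psi>m])
  have e\<Psi>: "(\<integral>\<omega>. \<psi> (XA \<omega>) (Y \<omega>) \<partial>P) = (\<integral>x. \<integral>z. \<Psi> x z \<partial>\<nu> \<partial>\<mu>)"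
  proof -
    have "(\<integral>\<omega>. \<psi> (XA \<omega>) (Y \<omega>) \<partial>P) = (\<integral>\<omega>. \<Psi> (XA \<omega>) (XB \<omega>) \<partial>P)"
      by (rule Bochner_Integration.integral_cong) (simp_all add: \<Psi>_def Y_eq)
    also have "\<dots> = (\<integral>p. (\<lambda>(x, z). \<Psi> x z) p \<partial>(\<mu> \<Otimes>\<^sub>M \<nu>))"
      unfolding law1[symmetric] by (simp add: integral_distr[OF measurable_Pair[OF XAm XBm] \<Psi>m])
    also have "\<dots> = (\<integral>x. \<integral>z. \<Psi> x z \<partial>\<nu> \<partial>\<mu>)" using pmn.integral_fst[OF i\<Psi>] by simp
    finally show ?thesis .
  qed
  define h where "h = (\<lambda>x y. \<integral>z. k y (g (x, z)) \<partial>\<nu>)"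
  have hm: "(\<lambda>(x, y). h x y) \<in> borel_measurable (PiM A M \<Otimes>\<^sub>M N)"
  proof -
    interpret sfn: sigma_finite_measure \<nu> using p\<nu> by (rule prob_space_imp_sigma_finite)
    have b1: "(\<lambda>q. snd (fst q)) \<in> (PiM A M \<Otimes>\<^sub>M N) \<Otimes>\<^sub>M PiM B M \<rightarrow>\<^sub>M N"
      by (rule measurable_compose[OF measurable_fst measurable_snd])
    have b2: "(\<lambda>q. g (fst (fst q), snd q)) \<in> (PiM A M \<Otimes>\<^sub>M N) \<Otimes>\<^sub>M PiM B M \<rightarrow>\<^sub>M N"
      by (rule measurable_compose[OF measurable_Pair[OF measurable_compose[OF measurable_fst measurable_fst] measurable_snd] gm])
    have "(\<lambda>q. case_prod k (snd (fst q), g (fst (fst q), snd q))) \<in> borel_measurable ((PiM A M \<Otimes>\<^sub>M N) \<Otimes>\<^sub>M PiM B M)"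
      by (rule measurable_compose[OF measurable_Pair[OF b1 b2] k_meas])
    then have "(\<lambda>(p, z). k (snd p) (g (fst p, z))) \<in> borel_measurable ((PiM A M \<Otimes>\<^sub>M N) \<Otimes>\<^sub>M \<nu>)"
      by (simp add: split_beta' measurable_cong_sets[OF sets_pair_measure_cong[OF refl s\<nu>(1)] refl])
    from sigma_finite_measure.borel_measurable_lebesgue_integral[OF prob_space_imp_sigma_finite[OF p\<nu>] this] show ?thesis by (simp add: h_def split_beta')
  qed
  have iDg': "integrable (\<mu> \<Otimes>\<^sub>M \<nu>) (\<lambda>(x, z). D (g (x, z)))" using iDg by (simp add: split_beta')
  have AEint: "AE x in \<mu>. integrable \<nu> (\<lambda>z. D (g (x, z)))"
    using pmn.AE_integrable_fst[OF iDg'] .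
  have eqAE: "AE x in \<mu>. (\<integral>z. \<Psi> x z \<partial>\<nu>) = (\<integral>y. h x y \<partial>K x)"
    using AEint AE_space
  proof eventually_elim
    case (elim x)
    then have x: "x \<in> space (PiM A M)" by simp
    have gx: "(\<lambda>z. g (x, z)) \<in> \<nu> \<rightarrow>\<^sub>M N"
      using measurable_compose[OF measurable_Pair1'[OF x] gm] by (simp add: measurable_cong_sets[OF s\<nu>(1) refl])
    interpret pk: pair_sigma_finite "K x" \<nu> by (rule pairK[OF x p\<nu>])
    have c2: "integrable (K x) (\<lambda>y. k y y)" using iDK[OF x] by (simp add: D_def)
    have c4: "integrable \<nu> (\<lambda>z. k (g (x, z)) (g (x, z)))" using elim by (simp add: D_def)
    have "integrable (K x \<Otimes>\<^sub>M \<nu>) (\<lambda>(u, v). k u (g (x, v)))"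
      using pd_integrable_pair[OF k_pd k_meas Kx(3)[OF x] p\<nu> idN[OF Kx(1)[OF x]] gx c2 c4] .
    from pk.Fubini_integral[OF this] show ?case by (simp add: \<Psi>_def \<psi>_def h_def)
  qed
  have i\<Psi>fst: "integrable \<mu> (\<lambda>x. \<integral>z. \<Psi> x z \<partial>\<nu>)" using pmn.integrable_fst[OF i\<Psi>] .
  define F where "F = (\<lambda>q. k (\<eta> (fst q)) (g (restrict (fst q) A, snd q)))"
  have Fm: "F \<in> borel_measurable (PiM {1..d} M \<Otimes>\<^sub>M PiM B M)"
  proof -
    have a1: "(\<lambda>q. \<eta> (fst q)) \<in> PiM {1..d} M \<Otimes>\<^sub>M PiM B M \<rightarrow>\<^sub>M N"
      by (rule measurable_compose[OF measurable_fst \<eta>_meas])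
    have a2: "(\<lambda>q. g (restrict (fst q) A, snd q)) \<in> PiM {1..d} M \<Otimes>\<^sub>M PiM B M \<rightarrow>\<^sub>M N"
      by (rule measurable_compose[OF measurable_Pair[OF measurable_compose[OF measurable_fst measurable_restrict_subset[OF A]] measurable_snd] gm])
    from measurable_compose[OF measurable_Pair[OF a1 a2] k_meas] show ?thesis by (simp add: F_def)
  qed
  have FP: "F (X \<omega>, X'B \<omega>) = k (Y \<omega>) (YA \<omega>)" if "\<omega> \<in> space P" for \<omega>
    using YA_eq[OF that] by (simp add: F_def Y_def XA_def)
  have pPX\<nu>: "pair_sigma_finite PX \<nu>" using pPX p\<nu> by (simp add: pair_sigma_finite_def prob_space_imp_sigma_finite)
  interpret pxn: pair_sigma_finite PX \<nu> by (rule pPX\<nu>)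
  have iF: "integrable (PX \<Otimes>\<^sub>M \<nu>) F"
  proof -
    have "integrable P (\<lambda>\<omega>. F (X \<omega>, X'B \<omega>))" using int_e by (rule integrable_cong_sp) (simp add: FP)
    then show ?thesis unfolding law4[symmetric] integrable_distr_eq[OF measurable_Pair[OF X_rv X'Bm] Fm] .
  qed
  have hF: "h (XA \<omega>) (Y \<omega>) = (\<integral>z. F (X \<omega>, z) \<partial>\<nu>)" for \<omega> by (simp add: h_def F_def XA_def Y_def)
  have iFfst: "integrable PX (\<lambda>u. \<integral>z. F (u, z) \<partial>\<nu>)" using pxn.integrable_fst'[OF iF] .
  have Ffm: "(\<lambda>u. \<integral>z. F (u, z) \<partial>\<nu>) \<in> borel_measurable (PiM {1..d} M)"
    using borel_measurable_integrable[OF iFfst] by (simp add: measurable_cong_sets[OF sPX(1) refl])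
  have ih: "integrable P (\<lambda>\<omega>. h (XA \<omega>) (Y \<omega>))"
    using iFfst unfolding PX_def integrable_distr_eq[OF X_rv Ffm] by (simp add: hF)
  have eh: "(\<integral>\<omega>. h (XA \<omega>) (Y \<omega>) \<partial>P) = e"
  proof -
    have "(\<integral>\<omega>. h (XA \<omega>) (Y \<omega>) \<partial>P) = (\<integral>\<omega>. (\<lambda>u. \<integral>z. F (u, z) \<partial>\<nu>) (X \<omega>) \<partial>P)" by (simp add: hF)
    also have "\<dots> = (\<integral>u. \<integral>z. F (u, z) \<partial>\<nu> \<partial>PX)" unfolding PX_def by (rule integral_distr[OF X_rv Ffm, symmetric])
    also have "\<dots> = (\<integral>q. F q \<partial>(PX \<Otimes>\<^sub>M \<nu>))" by (rule pxn.integral_fst'[OF iF])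
    also have "\<dots> = (\<integral>\<omega>. F (X \<omega>, X'B \<omega>) \<partial>P)" unfolding law4[symmetric]
      by (rule integral_distr[OF measurable_Pair[OF X_rv X'Bm] Fm])
    also have "\<dots> = e" unfolding e_def by (rule Bochner_Integration.integral_cong) (simp_all add: FP)
    finally show ?thesis .
  qed
  note clh = cond_law_integral[where f=h, OF P XAm Ym K' hm ih]
  have eT3: "(\<integral>x. T3 x \<partial>\<mu>) = e"
  proof -
    have m1: "(\<lambda>x. \<integral>z. \<Psi> x z \<partial>\<nu>) \<in> borel_measurable \<mu>" using borel_measurable_integrable[OF i\<Psi>fst] .
    have m2: "(\<lambda>x. \<integral>y. h x y \<partial>K x) \<in> borel_measurable \<mu>" using borel_measurable_integrable[OF clh(2)] by (simp add: \<mu>_def)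
    have "(\<integral>x. T3 x \<partial>\<mu>) = (\<integral>x. \<integral>y'. \<psi> x y' \<partial>K x \<partial>\<mu>)"
      by (rule Bochner_Integration.integral_cong) (simp_all add: T3_eq)
    also have "\<dots> = (\<integral>\<omega>. \<psi> (XA \<omega>) (Y \<omega>) \<partial>P)" using cl\<psi>(3) by (simp add: \<mu>_def)
    also have "\<dots> = (\<integral>x. \<integral>z. \<Psi> x z \<partial>\<nu> \<partial>\<mu>)" by (rule e\<Psi>)
    also have "\<dots> = (\<integral>x. \<integral>y. h x y \<partial>K x \<partial>\<mu>)" by (rule integral_cong_AE[OF m1 m2 eqAE])
    also have "\<dots> = (\<integral>\<omega>. h (XA \<omega>) (Y \<omega>) \<partial>P)" using clh(3) by (simp add: \<mu>_def)
    also have "\<dots> = e" by (rule eh)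
    finally show ?thesis .
  qed

  have MM: "MMD2 k PY (K x) = c - 2 * T2 x + T3 x" for x
    by (simp add: MMD2_def cc T2_def T3_def)
  have ic: "integrable \<mu> (\<lambda>x. c)" by (rule finite_measure.integrable_const[OF prob_space.finite_measure[OF p\<mu>]])
  have "(\<integral>x. MMD2 k PY (K x) \<partial>\<mu>) = (\<integral>x. c - 2 * T2 x + T3 x \<partial>\<mu>)" by (simp add: MM)
  also have "\<dots> = (\<integral>x. c - 2 * T2 x \<partial>\<mu>) + (\<integral>x. T3 x \<partial>\<mu>)"
    using ic iT2 iT3 by (intro Bochner_Integration.integral_add) auto
  also have "(\<integral>x. c - 2 * T2 x \<partial>\<mu>) = (\<integral>x. c \<partial>\<mu>) - (\<integral>x. 2 * T2 x \<partial>\<mu>)"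
    using ic iT2 by (intro Bochner_Integration.integral_diff) auto
  also have "(\<integral>x. c \<partial>\<mu>) = c" using prob_space.prob_space[OF p\<mu>] by simp
  also have "(\<integral>x. 2 * T2 x \<partial>\<mu>) = 2 * c" using eT2 by simp
  finally have fin: "(\<integral>x. MMD2 k PY (K x) \<partial>\<mu>) = e - c" using eT3 by simp
  then show ?thesis by (simp add: \<mu>_def PY_def XA_def Y_def e_def c_def YA_def Y'_def)
qed



end
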